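(* Let $c\geq 2$ be an integer such that $c+1$ is a prime power, and let $m\geq c+1$ be any prime power. Then there exists a $q$-ary $c$-frameproof code of length $c+2$ and cardinality $\frac{c+2}{c}(q-1)^2$, where $q=cm+1$.
   Context: For $P\subseteq F^l$ over a finite alphabet $F$, $desc(P)=\{x\in F^l: \text{for every } i\in\{1,\ldots,l\} \text{ there is } y\in P \text{ with } x_i=y_i\}$. For an integer $c\geq 2$, a $c$-frameproof code of length $l$ is a subset $C\subseteq F^l$ with $desc(P)\cap C=P$ for every $P\subseteq C$ with $|P|\leq c$; it is $q$-ary if $|F|=q$. *)

theory Defs
  imports Main "HOL-Number_Theory.Prime_Powers"
begin

definition words :: "'a set \<Rightarrow> nat \<Rightarrow> 'a list set" where
  "words F l = {x. length x = l \<and> set x \<subseteq> F}"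

definition desc :: "'a set \<Rightarrow> nat \<Rightarrow> 'a list set \<Rightarrow> 'a list set" where
  "desc F l P = {x \<in> words F l. \<forall>i<l. \<exists>y\<in>P. x ! i = y ! i}"

definition frameproof :: "nat \<Rightarrow> 'a set \<Rightarrow> nat \<Rightarrow> 'a list set \<Rightarrow> bool" where
  "frameproof c F l C \<longleftrightarrow> C \<subseteq> words F l \<and>
     (\<forall>P. P \<subseteq> C \<and> card P \<le> c \<longrightarrow> desc F l P \<inter> C = P)"

end

theory Submission
  imports Defs "HOL-Number_Theory.Residues" "HOL-Algebra.Algebraic_Closure"
begin

lemma (in cring) binomial:
  assumes x: "x \<in> carrier R" and y: "y \<in> carrier R"
  shows "(x \<oplus> y) [^] n = (\<Oplus>k \<in> {..n}. [(n choose k)] \<cdot> (x [^] k \<otimes> y [^] (n - k)))"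
proof (induction n)
  case 0
  then show ?case using x y by simp
next
  case (Suc n)
  define T where "T = (\<lambda>n k. [(n choose k)] \<cdot> (x [^] k \<otimes> y [^] (n - k)))"
  define U where "U = (\<lambda>k. [(n choose k)] \<cdot> (x [^] Suc k \<otimes> y [^] (n - k)))"
  define V where "V = (\<lambda>k. [(n choose k)] \<cdot> (x [^] k \<otimes> y [^] (Suc n - k)))"
  have Tc: "T n k \<in> carrier R" for n k using x y by (simp add: T_def)
  have Uc: "U k \<in> carrier R" for k using x y by (simp add: U_def)
  have Vc: "V k \<in> carrier R" for k using x y by (simp add: V_def)
  have IH: "(x \<oplus> y) [^] n = (\<Oplus>k \<in> {..n}. T n k)" using Suc by (simp add: T_def)
  have "(x \<oplus> y) [^] Suc n = (\<Oplus>k \<in> {..n}. T n k) \<otimes> x \<oplus> (\<Oplus>k \<in> {..n}. T n k) \<otimes> y"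
    using x y IH Tc by (simp add: r_distr)
  also have "(\<Oplus>k \<in> {..n}. T n k) \<otimes> x = (\<Oplus>k \<in> {..n}. U k)"
    using x y Tc apply (simp add: finsum_ldistr)
    apply (rule finsum_cong')
    apply (auto simp: T_def U_def add_pow_ldistr add_pow_rdistr m_ac nat_pow_Suc)
    done
  also have "(\<Oplus>k \<in> {..n}. T n k) \<otimes> y = (\<Oplus>k \<in> {..n}. V k)"
    using x y Tc apply (simp add: finsum_ldistr)
    apply (rule finsum_cong')
    apply (auto simp: T_def V_def add_pow_ldistr add_pow_rdistr m_ac Suc_diff_le nat_pow_Suc)
    done
  also have "(\<Oplus>k \<in> {..n}. V k) = (\<Oplus>k \<in> {..Suc n}. V k)"
    using Vc x y by (simp add: V_def binomial_eq_0)
  also have "\<dots> = V 0 \<oplus> (\<Oplus>k \<in> {..n}. V (Suc k))"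
    using Vc by (simp del: finsum_Suc add: finsum_Suc2 a_comm)
  also have "(\<Oplus>k \<in> {..n}. U k) \<oplus> (V 0 \<oplus> (\<Oplus>k \<in> {..n}. V (Suc k)))
     = V 0 \<oplus> (\<Oplus>k \<in> {..n}. U k \<oplus> V (Suc k))"
    using Uc Vc by (simp add: finsum_addf a_ac)
  also have "(\<Oplus>k \<in> {..n}. U k \<oplus> V (Suc k)) = (\<Oplus>k \<in> {..n}. T (Suc n) (Suc k))"
    apply (rule finsum_cong')
    apply (auto simp: T_def U_def V_def add.nat_pow_mult[symmetric] x y)
    done
  also have "V 0 \<oplus> (\<Oplus>k \<in> {..n}. T (Suc n) (Suc k)) = (\<Oplus>k \<in> {..Suc n}. T (Suc n) k)"
    using Tc x y by (simp del: finsum_Suc add: finsum_Suc2 a_comm T_def V_def)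
  finally show ?case by (simp add: T_def)
qed

lemma (in cring) char_mult_zero:
  assumes "[(p::nat)] \<cdot> \<one> = \<zero>" "z \<in> carrier R" "p dvd k"
  shows "[(k::nat)] \<cdot> z = \<zero>"
proof -
  obtain d where k: "k = p * d" using assms(3) by blast
  have "[p] \<cdot> z = \<zero>"
    using add_pow_ldistr[of \<one> z p] assms by simp
  then have "[d] \<cdot> ([p] \<cdot> z) = \<zero>" by simp
  then show ?thesis using add.nat_pow_pow[of z d p] assms k by simp
qed

lemma (in cring) freshman:
  assumes p: "Factorial_Ring.prime p" and ch: "[(p::nat)] \<cdot> \<one> = \<zero>"
    and x: "x \<in> carrier R" and y: "y \<in> carrier R"
  shows "(x \<oplus> y) [^] p = x [^] p \<oplus> y [^] p"
proof -
  define T where "T = (\<lambda>k. [(p choose k)] \<cdot> (x [^] k \<otimes> y [^] (p - k)))"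
  have Tc: "T k \<in> carrier R" for k using x y by (simp add: T_def)
  obtain p' where p': "p = Suc p'" using p by (cases p) auto
  have "(x \<oplus> y) [^] p = (\<Oplus>k \<in> {..p}. T k)" using binomial[OF x y] by (simp add: T_def)
  also have "\<dots> = T p \<oplus> (\<Oplus>k \<in> {..p'}. T k)" using Tc p' by simp
  also have "(\<Oplus>k \<in> {..p'}. T k) = (\<Oplus>k \<in> {..p'}. if 0 = k then T k else \<zero>)"
  proof (rule finsum_cong')
    fix k assume k: "k \<in> {..p'}"
    show "T k = (if 0 = k then T k else \<zero>)"
    proof (cases "k = 0")
      case False
      have dv: "p dvd (p choose k)" using k p' p False by (intro dvd_choose_prime) auto
      show ?thesis using False char_mult_zero[OF ch _ dv] x y by (simp add: T_def)
    qed simp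
  qed (use Tc in auto)
  also have "\<dots> = T 0" by (rule add.finprod_singleton) (use Tc in auto)
  finally show ?thesis using x y by (simp add: T_def a_comm)
qed

lemma (in cring) freshman_pow:
  assumes p: "Factorial_Ring.prime p" and ch: "[(p::nat)] \<cdot> \<one> = \<zero>"
    and x: "x \<in> carrier R" and y: "y \<in> carrier R"
  shows "(x \<oplus> y) [^] (p ^ e) = x [^] (p ^ e) \<oplus> y [^] (p ^ e)"
proof (induction e)
  case 0 then show ?case using x y by simp
next
  case (Suc e)
  have "(x \<oplus> y) [^] (p ^ Suc e) = ((x \<oplus> y) [^] (p ^ e)) [^] p"
    using x y by (simp add: nat_pow_pow mult.commute)
  also have "\<dots> = (x [^] (p ^ e)) [^] p \<oplus> (y [^] (p ^ e)) [^] p"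
    using Suc freshman[OF p ch] x y by simp
  finally show ?case using x y by (simp add: nat_pow_pow mult.commute)
qed

primrec geo :: "('a, 'b) ring_scheme \<Rightarrow> 'a \<Rightarrow> 'a \<Rightarrow> nat \<Rightarrow> 'a" where
  "geo R u v 0 = \<zero>\<^bsub>R\<^esub>"
| "geo R u v (Suc n) = u [^]\<^bsub>R\<^esub> n \<oplus>\<^bsub>R\<^esub> v \<otimes>\<^bsub>R\<^esub> geo R u v n"

lemma (in ring) geo_closed:
  "u \<in> carrier R \<Longrightarrow> v \<in> carrier R \<Longrightarrow> geo R u v n \<in> carrier R"
  by (induction n) auto

lemma (in cring) geo_tele:
  assumes u: "u \<in> carrier R" and v: "v \<in> carrier R"
  shows "(u \<ominus> v) \<otimes> geo R u v n = u [^] n \<ominus> v [^] n"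
proof (induction n)
  case 0 then show ?case using u v by (simp add: a_minus_def r_neg)
next
  case (Suc n)
  have g: "geo R u v n \<in> carrier R" using geo_closed u v .
  have "(u \<ominus> v) \<otimes> geo R u v (Suc n) = (u \<ominus> v) \<otimes> u [^] n \<oplus> v \<otimes> ((u \<ominus> v) \<otimes> geo R u v n)"
    using u v g by (simp add: r_distr m_lcomm)
  also have "\<dots> = (u \<ominus> v) \<otimes> u [^] n \<oplus> v \<otimes> (u [^] n \<ominus> v [^] n)" using Suc by simp
  also have "\<dots> = u [^] Suc n \<ominus> v [^] Suc n"
    using u v apply (simp add: a_minus_def r_distr l_distr r_minus l_minus m_ac a_ac nat_pow_Suc2)
    by (rule r_neg2) auto
  finally show ?case .
qed

lemma (in ring_hom_ring) geo_hom:
  assumes "u \<in> carrier R" "v \<in> carrier R"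
  shows "h (geo R u v n) = geo S (h u) (h v) n"
  using assms by (induction n) (auto simp: R.geo_closed hom_nat_pow)

lemma (in cring) geo_same:
  assumes a: "a \<in> carrier R"
  shows "geo R a a (Suc n) = [Suc n] \<cdot> (a [^] n)"
proof (induction n)
  case 0 then show ?case using a by simp
next
  case (Suc n)
  have "geo R a a (Suc (Suc n)) = a [^] Suc n \<oplus> a \<otimes> ([Suc n] \<cdot> (a [^] n))"
    using Suc by simp
  also have "\<dots> = a [^] Suc n \<oplus> [Suc n] \<cdot> (a [^] Suc n)"
    by (simp only: add_pow_rdistr[OF a nat_pow_closed[OF a]] nat_pow_Suc2[OF a])
  also have "\<dots> = [Suc (Suc n)] \<cdot> (a [^] Suc n)"
    using a add.nat_pow_mult[of "a [^] Suc n" 1 "Suc n"] by simp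
  finally show ?case .
qed

lemma (in ring_hom_ring) hom_add_pow_nat:
  "x \<in> carrier R \<Longrightarrow> h ([(k::nat)] \<cdot>\<^bsub>R\<^esub> x) = [k] \<cdot>\<^bsub>S\<^esub> h x"
  by (induction k) auto

lemma resid_char:
  assumes p: "Factorial_Ring.prime (p::nat)"
  shows "[p] \<cdot>\<^bsub>residue_ring (int p)\<^esub> \<one>\<^bsub>residue_ring (int p)\<^esub> = \<zero>\<^bsub>residue_ring (int p)\<^esub>"
proof -
  interpret Z: residues_prime p "residue_ring (int p)" by unfold_locales (use p in auto)
  have "[(k::nat)] \<cdot>\<^bsub>residue_ring (int p)\<^esub> \<one>\<^bsub>residue_ring (int p)\<^esub> = int k mod int p" for k
  proof (induction k)
    case 0 then show ?case by (simp add: Z.res_zero_eq)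
  next
    case (Suc k) then show ?case by (simp add: Z.res_add_eq Z.res_one_eq) (metis add.commute mod_add_left_eq)
  qed
  from this[of p] show ?thesis by (simp add: Z.res_zero_eq)
qed

lemma exists_charp_closed:
  assumes p: "Factorial_Ring.prime (p::nat)"
  shows "\<exists>L :: ((int list \<times> nat) multiset \<Rightarrow> int) ring. algebraically_closed L \<and> [p] \<cdot>\<^bsub>L\<^esub> \<one>\<^bsub>L\<^esub> = \<zero>\<^bsub>L\<^esub>"
proof -
  interpret Z: residues_prime p "residue_ring (int p)" by unfold_locales (use p in auto)
  define L where "L = Z.alg_closure"
  have cl: "algebraic_closure L (Z.indexed_const ` carrier (residue_ring (int p)))"
    and hom: "Z.indexed_const \<in> ring_hom (residue_ring (int p)) L"
    using Z.alg_closureE unfolding L_def by auto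
  interpret L: algebraic_closure L "Z.indexed_const ` carrier (residue_ring (int p))" by (rule cl)
  interpret H: ring_hom_ring "residue_ring (int p)" L Z.indexed_const
    using hom by (intro ring_hom_ringI2) (auto simp: Z.ring_axioms L.ring_axioms)
  have "[p] \<cdot>\<^bsub>L\<^esub> \<one>\<^bsub>L\<^esub> = Z.indexed_const ([p] \<cdot>\<^bsub>residue_ring (int p)\<^esub> \<one>\<^bsub>residue_ring (int p)\<^esub>)"
    by (simp add: H.hom_add_pow_nat)
  also have "\<dots> = \<zero>\<^bsub>L\<^esub>" using resid_char[OF p] by simp
  finally show ?thesis using L.algebraically_closed_axioms by blast
qed

locale charp_closed = algebraically_closed L for L (structure) +
  fixes p :: nat
  assumes p_prime: "Factorial_Ring.prime p" and charp: "[p] \<cdot> \<one> = \<zero>"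
begin

definition FS :: "nat \<Rightarrow> 'a set" where
  "FS q = {x \<in> carrier L. x [^] q = x}"

lemma XA_eq:
  assumes a: "a \<in> carrier L"
  shows "X \<ominus>\<^bsub>poly_ring L\<^esub> poly_of_const a = [\<one>, \<ominus> a]"
proof -
  have Ac: "poly_of_const a \<in> carrier (poly_ring L)"
    using canonical_embedding_is_hom[OF carrier_is_subring] a
    by (auto simp: ring_hom_def)
  show ?thesis
  proof (cases "a = \<zero>")
    case True
    interpret PR: domain "poly_ring L" by (rule univ_poly_is_domain[OF carrier_is_subring])
    have "poly_of_const a = \<zero>\<^bsub>poly_ring L\<^esub>"
      using True by (simp add: poly_of_const_def univ_poly_zero)
    then show ?thesis using var_closed(1)[OF carrier_is_subring] True
      by (simp add: a_minus_def var_def)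
  next
    case False
    have Ac': "[a] \<in> carrier (poly_ring L)" using Ac False by (simp add: poly_of_const_def)
    show ?thesis using a False
      by (simp add: a_minus_def univ_poly_a_inv_def'[OF carrier_is_subring Ac'] poly_of_const_def
          univ_poly_add var_def)
  qed
qed


lemma PR_domain: "domain (poly_ring L)" by (rule univ_poly_is_domain[OF carrier_is_subring])

lemma card_FS:
  assumes e: "e > 0"
  shows "card (FS (p ^ e)) = p ^ e"
proof -
  interpret PR: domain "poly_ring L" by (rule PR_domain)
  define q where "q = p ^ e"
  have p2: "p \<ge> 2" using p_prime prime_ge_2_nat by blast
  have q2: "q \<ge> 2" unfolding q_def using p2 e
    using self_le_power[of p e] by linarith
  have pq: "p dvd q" unfolding q_def using e by (simp add: dvd_power)
  have Xc: "X \<in> carrier (poly_ring L)" by (rule var_closed(1)[OF carrier_is_subring])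
  define P where "P = X [^]\<^bsub>poly_ring L\<^esub> q \<ominus>\<^bsub>poly_ring L\<^esub> X"
  have Pc: "P \<in> carrier (poly_ring L)" unfolding P_def using Xc by simp
  have evhom: "ring_hom_ring (poly_ring L) L (\<lambda>f. eval f x)" if "x \<in> carrier L" for x
    by (rule eval_ring_hom[OF carrier_is_subring that])
  have evP: "eval P x = x [^] q \<ominus> x" if x: "x \<in> carrier L" for x
  proof -
    interpret H: ring_hom_ring "poly_ring L" L "\<lambda>f. eval f x" by (rule evhom[OF x])
    show ?thesis unfolding P_def a_minus_def using Xc x by (simp add: H.hom_nat_pow H.hom_add H.hom_a_inv eval_var)
  qed
  have degP: "degree P = q"
  proof -
    have "X [^]\<^bsub>poly_ring L\<^esub> q = monom \<one> q"
      by (rule unitary_monom_eq_var_pow[OF carrier_is_subring, symmetric])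
    then have d1: "degree (X [^]\<^bsub>poly_ring L\<^esub> q) = q" by (simp add: monom_def)
    have d2: "degree (\<ominus>\<^bsub>poly_ring L\<^esub> X) = 1"
      using univ_poly_a_inv_degree[OF carrier_is_subring Xc] by (simp add: var_def)
    have c1: "polynomial (carrier L) (X [^]\<^bsub>poly_ring L\<^esub> q)"
      unfolding univ_poly_carrier using Xc by simp
    have c2: "polynomial (carrier L) (\<ominus>\<^bsub>poly_ring L\<^esub> X)"
      unfolding univ_poly_carrier using Xc by simp
    have "degree P = max q 1"
      unfolding P_def a_minus_def univ_poly_add
      using poly_add_degree_eq[OF carrier_is_subring c1 c2] d1 d2 q2 by simp
    then show ?thesis using q2 by simp
  qed
  have Pne: "P \<noteq> []" using degP q2 by auto
  have sz: "size (roots P) = q"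
    using roots_over_carrier[OF Pc] degP unfolding splitted_def by simp
  have setr: "set_mset (roots P) = FS q"
  proof -
    have "x \<in># roots P \<longleftrightarrow> x \<in> FS q" for x
    proof -
      have "x \<in># roots P \<longleftrightarrow> is_root P x" by (rule roots_mem_iff_is_root[OF Pc])
      also have "\<dots> \<longleftrightarrow> x \<in> FS q"
        unfolding is_root_def FS_def using evP Pne
        by (auto simp: r_right_minus_eq)
      finally show ?thesis .
    qed
    then show ?thesis by blast
  qed
  have cnt: "count (roots P) a = 1" if aS: "a \<in> FS q" for a
  proof -
    have a: "a \<in> carrier L" and aq: "a [^] q = a" using aS by (auto simp: FS_def)
    interpret C: ring_hom_ring "L \<lparr> carrier := carrier L \<rparr>" "poly_ring L" poly_of_const
      by (rule canonical_embedding_ring_hom[OF carrier_is_subring])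
    define A where "A = poly_of_const a"
    have Ac: "A \<in> carrier (poly_ring L)" unfolding A_def using a by simp
    have Aq: "A [^]\<^bsub>poly_ring L\<^esub> q = A"
      unfolding A_def using C.hom_nat_pow[of a q] a aq by simp
    define G where "G = geo (poly_ring L) X A q"
    have Gc: "G \<in> carrier (poly_ring L)" unfolding G_def using PR.geo_closed Xc Ac by blast
    define Q where "Q = G \<ominus>\<^bsub>poly_ring L\<^esub> \<one>\<^bsub>poly_ring L\<^esub>"
    have Qc: "Q \<in> carrier (poly_ring L)" unfolding Q_def using Gc by simp
    have tele: "(X \<ominus>\<^bsub>poly_ring L\<^esub> A) \<otimes>\<^bsub>poly_ring L\<^esub> G = X [^]\<^bsub>poly_ring L\<^esub> q \<ominus>\<^bsub>poly_ring L\<^esub> A"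
      unfolding G_def using PR.geo_tele[OF Xc Ac] Aq by simp
    have PQ: "P = (X \<ominus>\<^bsub>poly_ring L\<^esub> A) \<otimes>\<^bsub>poly_ring L\<^esub> Q"
    proof -
      have "(X \<ominus>\<^bsub>poly_ring L\<^esub> A) \<otimes>\<^bsub>poly_ring L\<^esub> Q
         = (X \<ominus>\<^bsub>poly_ring L\<^esub> A) \<otimes>\<^bsub>poly_ring L\<^esub> G \<ominus>\<^bsub>poly_ring L\<^esub> (X \<ominus>\<^bsub>poly_ring L\<^esub> A)"
        unfolding Q_def using Xc Ac Gc by (simp add: PR.r_distr a_minus_def PR.r_minus)
      also have "\<dots> = P" unfolding tele P_def using Xc Ac
        by (simp add: a_minus_def PR.minus_add PR.a_ac PR.r_neg2)
      finally show ?thesis by simp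
    qed
    have XA: "X \<ominus>\<^bsub>poly_ring L\<^esub> A = [\<one>, \<ominus> a]" unfolding A_def by (rule XA_eq[OF a])
    interpret E: ring_hom_ring "poly_ring L" L "\<lambda>f. eval f a" by (rule evhom[OF a])
    have evA: "eval A a = a" unfolding A_def using a
      by (cases "a = \<zero>") (auto simp: poly_of_const_def)
    have evG: "eval G a = \<zero>"
    proof -
      have "eval G a = geo L a a q" unfolding G_def
        using E.geo_hom[OF Xc Ac, of q] eval_var[OF a] evA by simp
      also have "\<dots> = [q] \<cdot> (a [^] (q - 1))"
        using geo_same[OF a, of "q - 1"] q2 by simp
      also have "\<dots> = \<zero>" using char_mult_zero[OF charp _ pq] a by simp
      finally show ?thesis .
    qed
    have evQ: "eval Q a = \<ominus> \<one>" unfolding Q_def a_minus_def using Gc evG a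
      by (simp add: E.hom_add E.hom_a_inv E.hom_one)
    have mo: "\<ominus> \<one> \<noteq> \<zero>"
    proof
      assume "\<ominus> \<one> = \<zero>"
      then have "\<ominus> (\<ominus> \<one>) = \<ominus> \<zero>" by simp
      then show False using one_not_zero by simp
    qed
    have Qne: "Q \<noteq> []" using evQ mo by (metis eval.simps(1))
    have nr: "\<not> is_root Q a" unfolding is_root_def using evQ mo by simp
    have "roots P = add_mset a (roots Q)"
      unfolding PQ XA by (rule poly_mult_degree_one_monic_imp_same_roots[OF a Qc Qne])
    moreover have "count (roots Q) a = 0" using roots_mem_iff_is_root[OF Qc] nr
      by (metis count_inI)
    ultimately show ?thesis by simp
  qed
  have "size (roots P) = sum (count (roots P)) (set_mset (roots P))"
    by (rule size_multiset_overloaded_eq)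
  also have "\<dots> = sum (\<lambda>_. 1) (FS q)" unfolding setr using cnt by simp
  finally show ?thesis using sz unfolding q_def by simp
qed

lemma FS_field:
  assumes e: "e > 0"
  shows "field (L \<lparr> carrier := FS (p ^ e) \<rparr>)"
proof -
  define q where "q = p ^ e"
  have q0: "q > 0" unfolding q_def using p_prime prime_gt_0_nat by simp
  have sub: "FS q \<subseteq> carrier L" unfolding FS_def by auto
  have one: "\<one> \<in> FS q" unfolding FS_def by simp
  have add: "x \<oplus> y \<in> FS q" if "x \<in> FS q" "y \<in> FS q" for x y
    using that freshman_pow[OF p_prime charp, of x y e] unfolding FS_def q_def by auto
  have mult: "x \<otimes> y \<in> FS q" if "x \<in> FS q" "y \<in> FS q" for x y
    using that nat_pow_distrib[of x y q] unfolding FS_def by auto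
  have m1: "\<ominus> \<one> \<in> FS q"
  proof -
    have "(\<ominus> \<one> \<oplus> \<one>) [^] q = (\<ominus> \<one>) [^] q \<oplus> \<one> [^] q"
      using freshman_pow[OF p_prime charp, of "\<ominus> \<one>" \<one> e] unfolding q_def by simp
    then have "\<zero> = (\<ominus> \<one>) [^] q \<oplus> \<one>" using q0 by (simp add: l_neg nat_pow_zero)
    then have "(\<ominus> \<one>) [^] q = \<ominus> \<one>"
      by (metis add.inv_closed minus_equality nat_pow_closed one_closed)
    then show ?thesis unfolding FS_def by simp
  qed
  have neg: "\<ominus> x \<in> FS q" if "x \<in> FS q" for x
  proof -
    have xc: "x \<in> carrier L" using that sub by auto
    have "\<ominus> x = \<ominus> \<one> \<otimes> x" using l_minus[of \<one> x] xc by simp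
    then show ?thesis using mult[OF m1 that] by simp
  qed
  have inv: "inv x \<in> FS q" if x: "x \<in> FS q - {\<zero>}" for x
  proof -
    have xc: "x \<in> carrier L" and xq: "x [^] q = x" and x0: "x \<noteq> \<zero>" using x unfolding FS_def by auto
    have ic: "inv x \<in> carrier L" using xc x0 by (simp add: field_Units)
    have "(inv x) [^] q \<otimes> x = (inv x \<otimes> x) [^] q" using xq xc ic by (simp add: nat_pow_distrib)
    also have "\<dots> = \<one>" using xc x0 by (simp add: field_Units)
    finally have "x \<otimes> (inv x) [^] q = \<one>" using xc ic by (simp add: m_comm)
    then have "inv x = (inv x) [^] q" using xc ic by (simp add: comm_inv_char)
    then show ?thesis using ic unfolding FS_def by simp
  qed
  have "subring (FS q) L" by (rule subringI[OF sub one neg mult add])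
  then have "subfield (FS q) L" using inv by (intro subfieldI') auto
  then show ?thesis using subfield_iff(2) unfolding q_def by blast
qed

end

lemma finite_field_exists:
  assumes p: "Factorial_Ring.prime (p::nat)" and e: "e > 0"
  shows "\<exists>R :: ((int list \<times> nat) multiset \<Rightarrow> int) ring.
           field R \<and> finite (carrier R) \<and> card (carrier R) = p ^ e"
proof -
  obtain L :: "((int list \<times> nat) multiset \<Rightarrow> int) ring" where
    L: "algebraically_closed L" and ch: "[p] \<cdot>\<^bsub>L\<^esub> \<one>\<^bsub>L\<^esub> = \<zero>\<^bsub>L\<^esub>"
    using exists_charp_closed[OF p] by blast
  interpret charp_closed L p using L ch p by (simp add: charp_closed_def charp_closed_axioms_def)
  have "card (FS (p ^ e)) = p ^ e" by (rule card_FS[OF e])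
  moreover have "p ^ e > 0" using p prime_gt_0_nat by simp
  ultimately have "finite (FS (p ^ e))" using card.infinite by fastforce
  then show ?thesis using FS_field[OF e] \<open>card (FS (p ^ e)) = p ^ e\<close>
    by (intro exI[of _ "L \<lparr> carrier := FS (p ^ e) \<rparr>"]) simp
qed

lemma (in domain) two_pt:
  assumes c: "a \<in> carrier R" "b \<in> carrier R" "a' \<in> carrier R" "b' \<in> carrier R"
    "s \<in> carrier R" "s' \<in> carrier R"
    and ss: "s \<noteq> s'"
    and e1: "a \<oplus> b \<otimes> s = a' \<oplus> b' \<otimes> s" and e2: "a \<oplus> b \<otimes> s' = a' \<oplus> b' \<otimes> s'"
  shows "b = b' \<and> a = a'"
proof -
  have "(b \<ominus> b') \<otimes> (s \<ominus> s') = (a \<oplus> b \<otimes> s) \<ominus> (a \<oplus> b \<otimes> s') \<ominus> ((a' \<oplus> b' \<otimes> s) \<ominus> (a' \<oplus> b' \<otimes> s'))"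
    using c by algebra
  also have "\<dots> = \<zero>" using e1 e2 c by (simp add: r_right_minus_eq)
  finally have "b \<ominus> b' = \<zero> \<or> s \<ominus> s' = \<zero>" using c by (simp add: integral_iff)
  moreover have "s \<ominus> s' \<noteq> \<zero>" using ss c by (simp add: r_right_minus_eq)
  ultimately have bb: "b = b'" using c by (simp add: r_right_minus_eq)
  then have "a = (a' \<oplus> b' \<otimes> s) \<ominus> b \<otimes> s" using e1 c by (simp add: r_right_minus_eq) algebra
  also have "\<dots> = a'" using bb c by algebra
  finally show ?thesis using bb by simp
qed

lemma (in field) oa_words:
  assumes fin: "finite (carrier R)" and n: "card (carrier R) = n" and k1: "1 \<le> k" and kn: "k \<le> n"
  shows "\<exists>W :: (nat \<Rightarrow> nat) set. card W = n ^ 2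
    \<and> (\<forall>w\<in>W. \<forall>i. (i \<le> k \<longrightarrow> w i < n) \<and> (k < i \<longrightarrow> w i = 0))
    \<and> (\<forall>w\<in>W. \<forall>w'\<in>W. \<forall>i j. i \<le> k \<longrightarrow> j \<le> k \<longrightarrow> i \<noteq> j \<longrightarrow> w i = w' i \<longrightarrow> w j = w' j \<longrightarrow> w = w')
    \<and> (\<lambda>i. 0) \<in> W
    \<and> (k = n \<longrightarrow> (\<forall>w\<in>W. w \<noteq> (\<lambda>i. 0) \<longrightarrow> (\<exists>i\<le>k. w i = 0)))"
proof -
  obtain \<psi> where \<psi>: "bij_betw \<psi> (carrier R) {0..<n}"
    using ex_bij_betw_finite_nat[OF fin] n by blast
  define \<phi> where "\<phi> x = (if x = \<zero> then 0 else if \<psi> x = 0 then \<psi> \<zero> else \<psi> x)" for x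
  have \<psi>inj: "inj_on \<psi> (carrier R)" and \<psi>im: "\<psi> ` carrier R = {0..<n}"
    using \<psi> by (auto simp: bij_betw_def)
  have \<phi>inj: "inj_on \<phi> (carrier R)"
  proof (rule inj_onI)
    fix x y assume x: "x \<in> carrier R" and y: "y \<in> carrier R" and e: "\<phi> x = \<phi> y"
    show "x = y"
    proof (rule ccontr)
      assume xy: "x \<noteq> y"
      have z: "\<zero> \<in> carrier R" by simp
      show False
        using e xy x y z inj_onD[OF \<psi>inj] unfolding \<phi>_def
        by (auto split: if_splits)
    qed
  qed
  have \<phi>rng: "\<phi> x < n" if "x \<in> carrier R" for x
  proof -
    have "\<psi> x < n" "\<psi> \<zero> < n" using \<psi>im that by auto
    then show ?thesis unfolding \<phi>_def by auto
  qed
  have \<phi>im: "\<phi> ` carrier R = {0..<n}"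
  proof (rule card_subset_eq)
    show "\<phi> ` carrier R \<subseteq> {0..<n}" using \<phi>rng by auto
    show "card (\<phi> ` carrier R) = card {0..<n}" using card_image[OF \<phi>inj] n by simp
  qed simp
  have \<phi>0: "\<phi> \<zero> = 0" unfolding \<phi>_def by simp
  define t where "t i = inv_into (carrier R) \<phi> i" for i
  have tc: "t i \<in> carrier R" if "i < n" for i
    unfolding t_def using \<phi>im that by (auto intro: inv_into_into)
  have \<phi>t: "\<phi> (t i) = i" if "i < n" for i
    unfolding t_def using \<phi>im that by (auto intro: f_inv_into_f)
  have tinj: "t i \<noteq> t j" if "i < n" "j < n" "i \<noteq> j" for i j
    using \<phi>t that by metis
  define w where "w a b i = (if i < k then \<phi> (a \<oplus> b \<otimes> t i) else if i = k then \<phi> b else 0)" for a b i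
  have agree: "a = a' \<and> b = b'"
    if c: "a \<in> carrier R" "b \<in> carrier R" "a' \<in> carrier R" "b' \<in> carrier R"
      and ij: "i \<le> k" "j \<le> k" "i \<noteq> j" and ei: "w a b i = w a' b' i" and ej: "w a b j = w a' b' j"
    for a b a' b' i j
  proof -
    have inj: "\<phi> x = \<phi> y \<Longrightarrow> x \<in> carrier R \<Longrightarrow> y \<in> carrier R \<Longrightarrow> x = y" for x y
      using inj_onD[OF \<phi>inj] by blast
    have ev: "w a b l = w a' b' l \<Longrightarrow> l < k \<Longrightarrow> a \<oplus> b \<otimes> t l = a' \<oplus> b' \<otimes> t l" for l
      using inj[of "a \<oplus> b \<otimes> t l" "a' \<oplus> b' \<otimes> t l"] c tc[of l] kn unfolding w_def by simp
    have evk: "w a b k = w a' b' k \<Longrightarrow> b = b'"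
      using inj[of b b'] c unfolding w_def by simp
    consider "i < k" "j < k" | "i = k" "j < k" | "i < k" "j = k" using ij by linarith
    then show ?thesis
    proof cases
      case 1
      then show ?thesis using two_pt[OF c tc[of i] tc[of j] tinj[of i j] ev[OF ei] ev[OF ej]] kn ij by auto
    next
      case 2
      then have "b = b'" using evk ei by simp
      then show ?thesis using ev[OF ej] 2 c tc[of j] kn by simp
    next
      case 3
      then have "b = b'" using evk ej by simp
      then show ?thesis using ev[OF ei] 3 c tc[of i] kn by simp
    qed
  qed
  define W where "W = (\<lambda>(a, b). w a b) ` (carrier R \<times> carrier R)"
  have winj: "inj_on (\<lambda>(a, b). w a b) (carrier R \<times> carrier R)"
  proof (rule inj_onI, clarify)
    fix a b a' b' assume c: "a \<in> carrier R" "b \<in> carrier R" "a' \<in> carrier R" "b' \<in> carrier R"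
      and e: "w a b = w a' b'"
    show "a = a' \<and> b = b'" using agree[OF c, of 0 k] e k1 by simp
  qed
  have card: "card W = n ^ 2"
    unfolding W_def using card_image[OF winj] n by (simp add: card_cartesian_product power2_eq_square)
  have rng: "\<forall>w\<in>W. \<forall>i. (i \<le> k \<longrightarrow> w i < n) \<and> (k < i \<longrightarrow> w i = 0)"
    unfolding W_def w_def using \<phi>rng tc kn by auto
  have ag: "\<forall>w\<in>W. \<forall>w'\<in>W. \<forall>i j. i \<le> k \<longrightarrow> j \<le> k \<longrightarrow> i \<noteq> j \<longrightarrow> w i = w' i \<longrightarrow> w j = w' j \<longrightarrow> w = w'"
    unfolding W_def using agree by fastforce
  have zw: "w \<zero> \<zero> = (\<lambda>i. 0)" unfolding w_def using \<phi>0 tc kn by (auto simp: fun_eq_iff)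
  have z: "(\<lambda>i. 0) \<in> W" unfolding W_def using zw[symmetric] by (intro image_eqI[of _ _ "(\<zero>, \<zero>)"]) auto
  have ex: "\<exists>i\<le>k. w' i = 0" if kn': "k = n" and w': "w' \<in> W" "w' \<noteq> (\<lambda>i. 0)" for w'
  proof -
    obtain a b where ab: "a \<in> carrier R" "b \<in> carrier R" "w' = w a b" using w' unfolding W_def by auto
    show ?thesis
    proof (cases "b = \<zero>")
      case True
      then show ?thesis using ab \<phi>0 by (intro exI[of _ k]) (simp add: w_def)
    next
      case False
      define s where "s = \<ominus> (a \<otimes> inv b)"
      have bu: "inv b \<in> carrier R" "b \<otimes> inv b = \<one>" using False ab by (auto simp: field_Units)
      have sc: "s \<in> carrier R" unfolding s_def using ab bu by simp
      define i where "i = \<phi> s"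
      have ik: "i < k" unfolding i_def using \<phi>rng[OF sc] kn' by simp
      have "t i = s" unfolding t_def i_def using \<phi>inj sc by simp
      then have "a \<oplus> b \<otimes> t i = a \<ominus> a \<otimes> (b \<otimes> inv b)" unfolding s_def using ab bu by algebra
      also have "\<dots> = \<zero>" using ab bu by algebra
      finally show ?thesis using ik ab \<phi>0 by (intro exI[of _ i]) (simp add: w_def)
    qed
  qed
  show ?thesis using card rng ag z ex by blast
qed

lemma ff_oa:
  assumes pp: "primepow n" and k1: "1 \<le> k" and kn: "k \<le> n"
  shows "\<exists>W :: (nat \<Rightarrow> nat) set. card W = n ^ 2
    \<and> (\<forall>w\<in>W. \<forall>i. (i \<le> k \<longrightarrow> w i < n) \<and> (k < i \<longrightarrow> w i = 0))
    \<and> (\<forall>w\<in>W. \<forall>w'\<in>W. \<forall>i j. i \<le> k \<longrightarrow> j \<le> k \<longrightarrow> i \<noteq> j \<longrightarrow> w i = w' i \<longrightarrow> w j = w' j \<longrightarrow> w = w')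
    \<and> (\<lambda>i. 0) \<in> W
    \<and> (k = n \<longrightarrow> (\<forall>w\<in>W. w \<noteq> (\<lambda>i. 0) \<longrightarrow> (\<exists>i\<le>k. w i = 0)))"
proof -
  obtain p e where p: "Factorial_Ring.prime p" and e: "e > 0" and n: "n = p ^ e"
    using pp unfolding primepow_def by auto
  obtain R :: "((int list \<times> nat) multiset \<Rightarrow> int) ring" where
    R: "field R" "finite (carrier R)" "card (carrier R) = p ^ e"
    using finite_field_exists[OF p e] by blast
  interpret field R by (rule R(1))
  show ?thesis using oa_words[OF R(2) _ k1 kn] R(3) n by simp
qed

lemma sym_inj:
  fixes m :: nat
  assumes "t < m" "t' < m"
  shows "(if s = 0 then 0 else Suc ((s - 1) * m + t)) = (if s' = 0 then 0 else Suc ((s' - 1) * m + t'))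
     \<longleftrightarrow> (s = 0 \<and> s' = 0) \<or> (s \<noteq> 0 \<and> s = s' \<and> t = t')"
proof (cases "s = 0 \<or> s' = 0")
  case True then show ?thesis by auto
next
  case False
  have "((s - 1) * m + t = (s' - 1) * m + t') \<longleftrightarrow> (s - 1 = s' - 1 \<and> t = t')"
  proof
    assume h: "(s - 1) * m + t = (s' - 1) * m + t'"
    have "((s - 1) * m + t) div m = s - 1" "((s - 1) * m + t) mod m = t"
      "((s' - 1) * m + t') div m = s' - 1" "((s' - 1) * m + t') mod m = t'"
      using assms by auto
    then show "s - 1 = s' - 1 \<and> t = t'" using h by metis
  qed auto
  then show ?thesis using False by auto
qed

lemma sym_rng:
  fixes m c s t :: nat
  assumes "s \<le> c" "t < m"
  shows "(if s = 0 then 0 else Suc ((s - 1) * m + t)) < c * m + 1"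
proof (cases "s = 0")
  case False
  have "(s - 1) * m + t < (s - 1) * m + m" using assms by simp
  also have "\<dots> = s * m" using False by (cases s) auto
  also have "\<dots> \<le> c * m" using assms by simp
  finally show ?thesis using False by simp
qed simp

theorem corollary2:
  fixes c m :: nat
  assumes "c \<ge> 2" and "primepow (c + 1)"
    and "primepow m" and "m \<ge> c + 1"
  shows "\<exists>(F :: nat set) C. finite F \<and> card F = c * m + 1 \<and>
           frameproof c F (c + 2) C \<and>
           real (card C) = (real c + 2) / real c * (real (c * m + 1) - 1) ^ 2"
proof -
  have c2: "c \<ge> 2" and mc: "m \<ge> c + 1" using assms by auto
  obtain W1 where W1card: "card W1 = (c + 1) ^ 2"
    and W1rng: "\<forall>w\<in>W1. \<forall>i. (i \<le> c + 1 \<longrightarrow> w i < c + 1) \<and> (c + 1 < i \<longrightarrow> w i = 0)"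
    and W1ag: "\<forall>w\<in>W1. \<forall>w'\<in>W1. \<forall>i j. i \<le> c + 1 \<longrightarrow> j \<le> c + 1 \<longrightarrow> i \<noteq> j \<longrightarrow> w i = w' i \<longrightarrow> w j = w' j \<longrightarrow> w = w'"
    and W1z: "(\<lambda>i. 0) \<in> W1"
    and W1ex: "\<forall>w\<in>W1. w \<noteq> (\<lambda>i. 0) \<longrightarrow> (\<exists>i\<le>c + 1. w i = 0)"
    using ff_oa[OF assms(2), of "c + 1"] by auto
  obtain W2 where W2card: "card W2 = m ^ 2"
    and W2rng: "\<forall>w\<in>W2. \<forall>i. (i \<le> c + 1 \<longrightarrow> w i < m) \<and> (c + 1 < i \<longrightarrow> w i = 0)"
    and W2ag: "\<forall>w\<in>W2. \<forall>w'\<in>W2. \<forall>i j. i \<le> c + 1 \<longrightarrow> j \<le> c + 1 \<longrightarrow> i \<noteq> j \<longrightarrow> w i = w' i \<longrightarrow> w j = w' j \<longrightarrow> w = w'"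
    using ff_oa[OF assms(3), of "c + 1"] mc by auto
  define U where "U = W1 - {\<lambda>i. 0}"
  have W1fin: "finite W1" using W1card by (intro card_ge_0_finite) simp
  have W2fin: "finite W2" using W2card mc by (intro card_ge_0_finite) simp
  have Ucard: "card U = (c + 1) ^ 2 - 1" unfolding U_def using W1card W1z W1fin by simp
  have zero_ex: "\<exists>k0\<le>c + 1. u k0 = 0" if "u \<in> U" for u using W1ex that unfolding U_def by auto
  have zero_un: "i = j" if "u \<in> U" "i \<le> c + 1" "j \<le> c + 1" "u i = 0" "u j = 0" for u i j
  proof (rule ccontr)
    assume ij: "i \<noteq> j"
    have uW: "u \<in> W1" using that(1) unfolding U_def by simp
    have "u = (\<lambda>i. 0)" using W1ag[rule_format, OF uW W1z that(2) that(3) ij] that(4,5) by simp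
    then show False using that(1) unfolding U_def by simp
  qed
  define sym where "sym s t = (if s = 0 then 0 else Suc ((s - 1) * m + t))" for s t :: nat
  define wd where "wd u v = map (\<lambda>i. sym (u i) (v i)) [0..<c + 2]" for u v :: "nat \<Rightarrow> nat"
  define C where "C = (\<lambda>(u, v). wd u v) ` (U \<times> W2)"
  define F where "F = {0..<c * m + 1}"
  have Urng: "u i \<le> c" if "u \<in> U" "i < c + 2" for u i
  proof -
    have "u \<in> W1" using that unfolding U_def by simp
    then show ?thesis using W1rng[rule_format, of u i] that by simp
  qed
  have Vrng: "v i < m" if "v \<in> W2" "i < c + 2" for v i
    using W2rng[rule_format, of v i] that by simp
  have agree: "wd u v ! i = wd u' v' ! i \<longleftrightarrow> (u i = 0 \<and> u' i = 0) \<or> (u i \<noteq> 0 \<and> u i = u' i \<and> v i = v' i)"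
    if "u \<in> U" "u' \<in> U" "v \<in> W2" "v' \<in> W2" "i < c + 2" for u u' v v' i
  proof -
    have "wd u v ! i = sym (u i) (v i)" "wd u' v' ! i = sym (u' i) (v' i)"
      using that(5) unfolding wd_def by (simp_all del: upt_Suc)
    then show ?thesis using sym_inj[OF Vrng[OF that(3,5)] Vrng[OF that(4,5)]] unfolding sym_def by simp
  qed
  have two: "u = u' \<and> v = v'"
    if uv: "u \<in> U" "u' \<in> U" "v \<in> W2" "v' \<in> W2" and ij: "i < c + 2" "j < c + 2" "i \<noteq> j"
      and nz: "u i \<noteq> 0" "u j \<noteq> 0" and ei: "wd u v ! i = wd u' v' ! i" and ej: "wd u v ! j = wd u' v' ! j"
    for u u' v v' i j
  proof -
    have "u i = u' i \<and> v i = v' i" using agree[OF uv ij(1)] ei nz by auto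
    moreover have "u j = u' j \<and> v j = v' j" using agree[OF uv ij(2)] ej nz by auto
    moreover have "u \<in> W1" "u' \<in> W1" using uv unfolding U_def by auto
    moreover have "i \<le> c + 1" "j \<le> c + 1" using ij by auto
    ultimately show ?thesis using W1ag[rule_format, of u u' i j] W2ag[rule_format, of v v' i j] uv ij by simp
  qed
  have two_nz: "\<exists>i j. i < c + 2 \<and> j < c + 2 \<and> i \<noteq> j \<and> u i \<noteq> 0 \<and> u j \<noteq> 0" if uU: "u \<in> U" for u
  proof -
    obtain k0 where k0: "k0 \<le> c + 1" "u k0 = 0" using zero_ex[OF uU] by blast
    have nz: "u i \<noteq> 0" if "i \<le> c + 1" "i \<noteq> k0" for i using zero_un[OF \<open>u \<in> U\<close> that(1) k0(1)] k0 that by auto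
    show ?thesis
    proof (cases "k0 = 0")
      case True then show ?thesis using nz[of 1] nz[of 2] c2 by (intro exI[of _ 1] exI[of _ 2]) auto
    next
      case False
      show ?thesis
      proof (cases "k0 = 1")
        case True then show ?thesis using nz[of 0] nz[of 2] c2 by (intro exI[of _ 0] exI[of _ 2]) auto
      next
        case False
        then show ?thesis using nz[of 0] nz[of 1] c2 \<open>k0 \<noteq> 0\<close> by (intro exI[of _ 0] exI[of _ 1]) auto
      qed
    qed
  qed
  have wdlen: "length (wd u v) = c + 2" for u v unfolding wd_def by (simp del: upt_Suc)
  have inj: "inj_on (\<lambda>(u, v). wd u v) (U \<times> W2)"
  proof (rule inj_onI, clarify)
    fix u v u' v' assume uv: "u \<in> U" "v \<in> W2" "u' \<in> U" "v' \<in> W2" and e: "wd u v = wd u' v'"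
    obtain i j where ij: "i < c + 2" "j < c + 2" "i \<noteq> j" "u i \<noteq> 0" "u j \<noteq> 0" using two_nz[OF uv(1)] by blast
    show "u = u' \<and> v = v'" using two[OF uv(1,3,2,4) ij] e by simp
  qed
  have Ccard: "card C = ((c + 1) ^ 2 - 1) * m ^ 2"
    unfolding C_def using card_image[OF inj] Ucard W2card by (simp add: card_cartesian_product)
  have Cfin: "finite C" unfolding C_def using W1fin W2fin unfolding U_def by simp
  have Cwords: "C \<subseteq> words F (c + 2)"
  proof
    fix x assume "x \<in> C"
    then obtain u v where uv: "u \<in> U" "v \<in> W2" "x = wd u v" unfolding C_def by auto
    have "set x \<subseteq> F"
    proof
      fix y assume "y \<in> set x"
      then obtain i where i: "i < c + 2" "y = sym (u i) (v i)" using uv(3) unfolding wd_def by (auto simp del: upt_Suc)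
      show "y \<in> F" using sym_rng[OF Urng[OF uv(1) i(1)] Vrng[OF uv(2) i(1)]] i unfolding F_def sym_def by simp
    qed
    then show "x \<in> words F (c + 2)" unfolding words_def using uv wdlen by simp
  qed
  have fp: "frameproof c F (c + 2) C"
    unfolding frameproof_def
  proof (intro conjI allI impI)
    show "C \<subseteq> words F (c + 2)" by (rule Cwords)
    fix P assume PC: "P \<subseteq> C \<and> card P \<le> c"
    have Pfin: "finite P" using PC Cfin finite_subset by blast
    show "desc F (c + 2) P \<inter> C = P"
    proof
      show "P \<subseteq> desc F (c + 2) P \<inter> C" using PC Cwords unfolding desc_def by blast
      show "desc F (c + 2) P \<inter> C \<subseteq> P"
      proof
        fix x assume x: "x \<in> desc F (c + 2) P \<inter> C"
        show "x \<in> P"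
        proof (rule ccontr)
          assume xP: "x \<notin> P"
          obtain u v where uv: "u \<in> U" "v \<in> W2" "x = wd u v" using x unfolding C_def by auto
          obtain k0 where k0: "k0 \<le> c + 1" "u k0 = 0" using zero_ex[OF uv(1)] by blast
          define I where "I = {0..<c + 2} - {k0}"
          have cov: "\<forall>i<c + 2. \<exists>y\<in>P. x ! i = y ! i" using x unfolding desc_def by blast
          define g where "g i = (SOME y. y \<in> P \<and> x ! i = y ! i)" for i
          have g: "g i \<in> P \<and> x ! i = g i ! i" if "i < c + 2" for i
          proof -
            have "\<exists>y. y \<in> P \<and> x ! i = y ! i" using cov that by blast
            then show ?thesis unfolding g_def by (rule someI_ex)
          qed
          have ginj: "inj_on g I"
          proof (rule inj_onI)
            fix i j assume i: "i \<in> I" and j: "j \<in> I" and e: "g i = g j"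
            show "i = j"
            proof (rule ccontr)
              assume ij: "i \<noteq> j"
              have il: "i < c + 2" and jl: "j < c + 2" using i j unfolding I_def by auto
              have "g i \<in> C" using g[OF il] PC by blast
              then obtain u' v' where uv': "u' \<in> U" "v' \<in> W2" "g i = wd u' v'" unfolding C_def by auto
              have nzi: "u i \<noteq> 0"
              proof
                assume "u i = 0"
                then have "i = k0" using zero_un[OF uv(1) _ k0(1) _ k0(2), of i] il by simp
                then show False using i unfolding I_def by simp
              qed
              have nzj: "u j \<noteq> 0"
              proof
                assume "u j = 0"
                then have "j = k0" using zero_un[OF uv(1) _ k0(1) _ k0(2), of j] jl by simp
                then show False using j unfolding I_def by simp
              qed
              have ei: "wd u v ! i = wd u' v' ! i" using g[OF il] uv(3) uv'(3) by simp
              have ej: "wd u v ! j = wd u' v' ! j" using g[OF jl] uv(3) uv'(3) e by simp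
              have "u = u' \<and> v = v'"
                by (rule two[OF uv(1) uv'(1) uv(2) uv'(2) il jl ij nzi nzj ei ej])
              then have "x = g i" using uv uv' by simp
              then show False using g[OF il] xP by simp
            qed
          qed
          have "card I = c + 1" unfolding I_def using k0 by simp
          moreover have "g ` I \<subseteq> P" using g unfolding I_def by auto
          ultimately have "c + 1 \<le> card P"
            using card_inj_on_le[OF ginj _ Pfin] by simp
          then show False using PC by simp
        qed
      qed
    qed
  qed
  have Fcard: "card F = c * m + 1" unfolding F_def by simp
  have "real (card C) = (real c + 2) / real c * (real (c * m + 1) - 1) ^ 2"
  proof -
    have e1: "(c + 1) ^ 2 - 1 = c * (c + 2)" by (simp add: power2_eq_square algebra_simps)
    have "real (card C) = real c * (real c + 2) * real m ^ 2" unfolding Ccard e1 by (simp add: distrib_left)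
    also have "\<dots> = (real c + 2) / real c * (real (c * m + 1) - 1) ^ 2"
      using c2 by (simp add: field_simps power2_eq_square algebra_simps)
    finally show ?thesis .
  qed
  then show ?thesis using fp Fcard unfolding F_def
    by (intro exI[of _ "{0..<c * m + 1}"] exI[of _ C]) simp
qed

end
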